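(* Let $(\eta_k)_{k\in\mathbb{N}}$ be independent random variables with values in $\mathbb{N}$, $P(\eta_k=i)=p_{ik}$ with $p_{ik}\ge0$ and $\sum_{i=1}^\infty p_{ik}=1$ for all $k$, and suppose there exists $i_0\in\mathbb{N}$ with $\sum_{k=1}^\infty p_{i_0k}=+\infty$. Let $$\eta=\sum_{k=1}^\infty\frac{(-1)^{k-1}}{\eta_1(\eta_1+\eta_2)\cdots(\eta_1+\eta_2+\dots+\eta_k)}.$$ Then: (1) $\eta$ has a purely discrete distribution if and only if $\prod_{k=1}^\infty\max_i p_{ik}>0$; (2) in all other cases $\eta$ has a singularly continuous distribution. *)

theory Defs
  imports "HOL-Probability.Probability"
begin

definition purely_discrete_distr :: "real measure \<Rightarrow> bool" where
  "purely_discrete_distr N \<longleftrightarrow> (\<exists>S. countable S \<and> (AE x in N. x \<in> S))"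

definition singular_continuous_distr :: "real measure \<Rightarrow> bool" where
  "singular_continuous_distr N \<longleftrightarrow>
     (\<forall>x. emeasure N {x} = 0) \<and>
     (\<exists>S \<in> sets borel. emeasure lborel S = 0 \<and> (AE x in N. x \<in> S))"

end

theory Submission
  imports Defs "HOL-Real_Asymp.Real_Asymp"
begin


definition G :: "(nat \<Rightarrow> nat) \<Rightarrow> real" where
  "G q = (\<Sum>k. (-1)^k / (\<Prod>j\<le>k. real (q j)))"

definition inc :: "(nat \<Rightarrow> nat) \<Rightarrow> bool" where
  "inc q \<longleftrightarrow> (\<forall>k. q k < q (Suc k)) \<and> 1 \<le> q 0"

lemma inc_ge: "inc q \<Longrightarrow> k + 1 \<le> q k"
proof (induction k)
  case 0 then show ?case by (simp add: inc_def)
next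
  case (Suc k) then have "k+1 \<le> q k" "q k < q (Suc k)" by (auto simp: inc_def)
  then show ?case by simp
qed

lemma inc_shift: "inc q \<Longrightarrow> inc (\<lambda>k. q (Suc k))"
proof -
  assume a: "inc q"
  have "2 \<le> q 1" using inc_ge[OF a, of 1] by simp
  then show ?thesis using a unfolding inc_def by simp
qed

lemma prod_ge: "inc q \<Longrightarrow> real k + 1 \<le> (\<Prod>j\<le>k. real (q j))"
proof (induction k)
  case 0 then show ?case using inc_ge[OF 0, of 0] by simp
next
  case (Suc k)
  have "real (Suc k) + 1 \<le> real (q (Suc k))" using inc_ge[OF Suc.prems, of "Suc k"] by simp
  moreover have "1 \<le> (\<Prod>j\<le>k. real (q j))" using Suc by simp
  ultimately have "1 * (real (Suc k) + 1) \<le> (\<Prod>j\<le>k. real (q j)) * real (q (Suc k))"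
    by (intro mult_mono) auto
  then show ?case by (simp add: prod.atMost_Suc)
qed

lemma G_leib:
  assumes "inc q"
  shows "summable (\<lambda>k. (-1)^k / (\<Prod>j\<le>k. real (q j)))"
    and "1 / real (q 0) - 1 / (real (q 0) * real (q 1)) \<le> G q"
    and "G q \<le> 1 / real (q 0)"
proof -
  define a where "a k = 1 / (\<Prod>j\<le>k. real (q j))" for k
  have pos: "0 < (\<Prod>j\<le>k. real (q j))" for k using prod_ge[OF assms, of k] by linarith
  have eq: "(\<lambda>k. (-1)^k / (\<Prod>j\<le>k. real (q j))) = (\<lambda>k. (-1)^k * a k)"
    by (rule ext) (simp add: a_def)
  have a0: "a \<longlonglongrightarrow> 0"
  proof (rule tendsto_sandwich[of "\<lambda>_. 0" _ _ "\<lambda>k. 1 / (real k + 1)"])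
    show "\<forall>\<^sub>F n in sequentially. 0 \<le> a n"
      by (intro always_eventually allI) (simp add: a_def less_imp_le[OF pos])
    show "\<forall>\<^sub>F n in sequentially. a n \<le> 1 / (real n + 1)"
    proof (intro always_eventually allI)
      fix n
      have c1: "real n + 1 \<le> (\<Prod>j\<le>n. real (q j))" by (rule prod_ge[OF assms])
      have c2: "0 < (\<Prod>j\<le>n. real (q j)) * (real n + 1)" using pos[of n] by simp
      show "a n \<le> 1 / (real n + 1)" unfolding a_def by (rule divide_left_mono[OF c1 zero_le_one c2])
    qed
    show "(\<lambda>n. 1 / (real n + 1)) \<longlonglongrightarrow> 0"
      using LIMSEQ_inverse_real_of_nat by (simp add: inverse_eq_divide add.commute)
  qed simp
  have apos: "\<And>n. 0 \<le> a n" by (simp add: a_def less_imp_le[OF pos])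
  have amono: "\<And>n. a (Suc n) \<le> a n"
  proof -
    fix n
    define P where "P = (\<Prod>j\<le>n. real (q j))"
    define x where "x = real (q (Suc n))"
    have P0: "0 < P" unfolding P_def by (rule pos)
    have x1: "1 \<le> x" using inc_ge[OF assms, of "Suc n"] by (simp add: x_def)
    have c1: "P \<le> P * x" using P0 x1 by simp
    have c2: "0 < P * x * P" using P0 x1 by simp
    have "1 / (P * x) \<le> 1 / P" by (rule divide_left_mono[OF c1 zero_le_one c2])
    moreover have "a (Suc n) = 1 / (P * x)" by (simp add: a_def P_def x_def prod.atMost_Suc)
    moreover have "a n = 1 / P" by (simp add: a_def P_def)
    ultimately show "a (Suc n) \<le> a n" by simp
  qed
  note L = summable_Leibniz'[OF a0 apos amono]
  show "summable (\<lambda>k. (-1)^k / (\<Prod>j\<le>k. real (q j)))" unfolding eq by (rule L(1))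
  have Gq: "G q = (\<Sum>i. (-1)^i*a i)" by (simp add: G_def eq)
  have A0: "a 0 = 1 / real (q 0)" by (simp add: a_def)
  have A1: "a 1 = 1 / (real (q 0) * real (q 1))" by (simp add: a_def prod.atMost_Suc)
  have "(\<Sum>i<2*1. (-1)^i*a i) \<le> (\<Sum>i. (-1)^i*a i)" by (rule L(2))
  moreover have "(\<Sum>i<2*1. (-1)^i*a i) = a 0 - a 1"
    by (simp add: numeral_2_eq_2)
  ultimately show "1 / real (q 0) - 1 / (real (q 0) * real (q 1)) \<le> G q" using Gq A0 A1 by simp
  have "(\<Sum>i. (-1)^i*a i) \<le> (\<Sum>i<2*0+1. (-1)^i*a i)" by (rule L(4))
  then show "G q \<le> 1 / real (q 0)" using Gq A0 by simp
qed

lemma G_pos: assumes "inc q" shows "0 < G q"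
proof -
  have q0: "1 \<le> real (q 0)" and q1: "2 \<le> real (q 1)" using inc_ge[OF assms, of 0] inc_ge[OF assms, of 1] by auto
  have "1 / (real (q 0) * real (q 1)) < 1 / real (q 0)"
    using q0 q1 by (auto simp: field_simps)
  then show ?thesis using G_leib(2)[OF assms] by linarith
qed

lemma G_shift:
  assumes "inc q"
  shows "G q = (1 - G (\<lambda>k. q (Suc k))) / real (q 0)"
proof -
  let ?f = "\<lambda>k. (-1)^k / (\<Prod>j\<le>k. real (q j))"
  let ?g = "\<lambda>k. (-1)^k / (\<Prod>j\<le>k. real (q (Suc j)))"
  have s: "summable ?f" by (rule G_leib(1)[OF assms])
  have s2: "summable ?g" using G_leib(1)[OF inc_shift[OF assms]] by simp
  have q0: "real (q 0) \<noteq> 0" using inc_ge[OF assms, of 0] by simp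
  have "(\<Sum>k. ?f (Suc k)) = (\<Sum>k. (- 1 / real (q 0)) * ?g k)"
    by (rule arg_cong[where f=suminf], rule ext) (simp add: prod.atMost_Suc_shift del: prod.atMost_Suc)
  also have "\<dots> = (- 1 / real (q 0)) * (\<Sum>k. ?g k)" by (rule suminf_mult[OF s2])
  finally have "(\<Sum>k. ?f (Suc k)) = (- 1 / real (q 0)) * G (\<lambda>k. q (Suc k))"
    by (simp add: G_def)
  moreover have "(\<Sum>k. ?f (Suc k)) = G q - ?f 0" using suminf_split_head[OF s] by (simp add: G_def)
  ultimately have "G q = 1 / real (q 0) - G (\<lambda>k. q (Suc k)) / real (q 0)" by simp
  then show ?thesis by (simp add: diff_divide_distrib)
qed

lemma G_bounds:
  assumes "inc q"
  shows "1 / (real (q 0) + 1) \<le> G q" "G q < 1 / real (q 0)"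
proof -
  have sh: "inc (\<lambda>k. q (Suc k))" by (rule inc_shift[OF assms])
  have gp: "0 < G (\<lambda>k. q (Suc k))" by (rule G_pos[OF sh])
  have gu: "G (\<lambda>k. q (Suc k)) \<le> 1 / real (q 1)" using G_leib(3)[OF sh] by simp
  have q01: "real (q 0) + 1 \<le> real (q 1)" using assms unfolding inc_def
    by (metis Suc_leI One_nat_def of_nat_1 of_nat_add of_nat_le_iff Suc_eq_plus1)
  have q0: "1 \<le> real (q 0)" using inc_ge[OF assms, of 0] by simp
  have "0 < real (q 1) * (real (q 0) + 1)" using q01 q0 by simp
  then have "1 / real (q 1) \<le> 1 / (real (q 0) + 1)" by (rule divide_left_mono[OF q01 zero_le_one])
  then have "1 - 1 / (real (q 0) + 1) \<le> 1 - G (\<lambda>k. q (Suc k))" using gu by linarith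
  then have "(1 - 1 / (real (q 0) + 1)) / real (q 0) \<le> (1 - G (\<lambda>k. q (Suc k))) / real (q 0)"
    by (rule divide_right_mono) (use q0 in simp)
  moreover have "(1 - 1 / (real (q 0) + 1)) / real (q 0) = 1 / (real (q 0) + 1)"
  proof -
    have "real (q 0) + real (q 0) * real (q 0) > 0" using q0 by (simp add: add_pos_pos)
    then show ?thesis using q0 by (simp add: field_simps)
  qed
  moreover have gs: "G q = (1 - G (\<lambda>k. q (Suc k))) / real (q 0)" by (rule G_shift[OF assms])
  ultimately show "1 / (real (q 0) + 1) \<le> G q" by linarith
  have "(1 - G (\<lambda>k. q (Suc k))) / real (q 0) < 1 / real (q 0)"
    by (rule divide_strict_right_mono) (use gp q0 in simp_all)
  then show "G q < 1 / real (q 0)" using gs by simp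
qed

lemma G_head:
  assumes "inc q" "inc q'" "G q = G q'"
  shows "q 0 = q' 0"
proof (rule ccontr)
  assume ne: "q 0 \<noteq> q' 0"
  have *: "G b < G a" if "inc a" "inc b" "a 0 < b 0" for a b
  proof -
    have "1 \<le> real (a 0)" using inc_ge[OF that(1), of 0] by simp
    have "real (a 0) + 1 \<le> real (b 0)" using that(3) by simp
    moreover have "0 < real (b 0) * (real (a 0) + 1)" using \<open>1 \<le> real (a 0)\<close> that(3) by simp
    ultimately have "1 / real (b 0) \<le> 1 / (real (a 0) + 1)" by (rule divide_left_mono[OF _ zero_le_one])
    moreover have "1 / (real (a 0) + 1) \<le> G a" by (rule G_bounds(1)[OF that(1)])
    moreover have "G b < 1 / real (b 0)" by (rule G_bounds(2)[OF that(2)])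
    ultimately show ?thesis by linarith
  qed
  show False
  proof (cases "q 0 < q' 0")
    case True then show False using *[OF assms(1,2) True] assms(3) by linarith
  next
    case False then have lt: "q' 0 < q 0" using ne by simp
    show False using *[OF assms(2,1) lt] assms(3) by linarith
  qed
qed

lemma G_inj:
  assumes "inc q" "inc q'" "G q = G q'"
  shows "q = q'"
proof
  fix n show "q n = q' n" using assms
  proof (induction n arbitrary: q q')
    case 0 then show ?case by (rule G_head)
  next
    case (Suc n)
    have h: "q 0 = q' 0" by (rule G_head[OF Suc.prems])
    have "real (q 0) \<noteq> 0" using inc_ge[OF Suc.prems(1), of 0] by simp
    moreover have "(1 - G (\<lambda>k. q (Suc k))) / real (q 0) = (1 - G (\<lambda>k. q' (Suc k))) / real (q 0)"
    proof -
      have "(1 - G (\<lambda>k. q (Suc k))) / real (q 0) = G q" by (rule G_shift[OF Suc.prems(1), symmetric])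
      also have "\<dots> = G q'" by (rule Suc.prems(3))
      also have "\<dots> = (1 - G (\<lambda>k. q' (Suc k))) / real (q' 0)" by (rule G_shift[OF Suc.prems(2)])
      finally show ?thesis unfolding h .
    qed
    ultimately have "G (\<lambda>k. q (Suc k)) = G (\<lambda>k. q' (Suc k))" by simp
    then show ?case using Suc.IH[OF inc_shift[OF Suc.prems(1)] inc_shift[OF Suc.prems(2)]] by simp
  qed
qed



definition img :: "nat \<Rightarrow> real set \<Rightarrow> real set" where
  "img r A = (\<lambda>x. 1 - real r * x) -` A"

lemma img_sets: "A \<in> sets borel \<Longrightarrow> img r A \<in> sets borel"
proof -
  assume A: "A \<in> sets borel"
  have m: "(\<lambda>x::real. 1 - real r * x) \<in> borel_measurable borel" by simp
  have "(\<lambda>x::real. 1 - real r * x) -` A \<inter> space borel \<in> sets borel" by (rule measurable_sets[OF m A])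
  then show ?thesis by (simp add: img_def)
qed

lemma img_measure:
  assumes A: "A \<in> sets borel" and r: "0 < r"
  shows "emeasure lborel A = ennreal (real r) * emeasure lborel (img r A)"
proof -
  have c: "- real r \<noteq> 0" using r by simp
  have eq: "lborel = density (distr lborel borel (\<lambda>x. 1 + (- real r) * x)) (\<lambda>_. ennreal (abs (- real r)))"
    by (rule lborel_real_affine[OF c])
  have "emeasure lborel A = emeasure (density (distr lborel borel (\<lambda>x. 1 + (- real r) * x)) (\<lambda>_. ennreal (abs (- real r)))) A"
    using eq by (rule arg_cong)
  also have "\<dots> = ennreal (abs (- real r)) * emeasure (distr lborel borel (\<lambda>x. 1 + (- real r) * x)) A"
    by (rule emeasure_density_const) (use A in simp)
  also have "emeasure (distr lborel borel (\<lambda>x. 1 + (- real r) * x)) A = emeasure lborel ((\<lambda>x. 1 + (- real r) * x) -` A \<inter> space lborel)"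
    by (rule emeasure_distr) (use A in simp_all)
  also have "(\<lambda>x. 1 + (- real r) * x) -` A \<inter> space lborel = img r A" by (simp add: img_def)
  finally show ?thesis by simp
qed

lemma ennr_div:
  assumes "ennreal r * X \<le> ennreal B" "0 < r"
  shows "X \<le> ennreal (B / r)"
proof -
  have "X = ennreal (1 / r) * (ennreal r * X)"
    using assms(2) by (simp add: ennreal_mult'' mult.assoc[symmetric] flip: ennreal_mult)
  also have "\<dots> \<le> ennreal (1 / r) * ennreal B" by (rule mult_left_mono[OF assms(1)]) simp
  also have "\<dots> = ennreal (1 / r * B)" by (rule ennreal_mult'[symmetric]) (use assms(2) in simp)
  also have "\<dots> = ennreal (B / r)" by simp
  finally show ?thesis .
qed

lemma tele_pt:
  fixes r c :: real
  assumes "1 \<le> r" "0 \<le> c"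
  shows "c / (r * (r + 1)^2) \<le> c / 2 / r^2 - c / 2 / (r + 1)^2"
proof -
  have e1: "c / 2 / r^2 - c / 2 / (r + 1)^2 = c * (2 * r + 1) / (2 * r^2 * (r+1)^2)"
  proof -
    have a: "r \<noteq> 0" "r + 1 \<noteq> 0" using assms by auto
    have "c / 2 / r^2 - c / 2 / (r + 1)^2 = ((c/2)*(r+1)^2 - (c/2)*r^2)/(r^2*(r+1)^2)"
      by (rule diff_frac_eq) (use a in simp_all)
    also have "(c/2)*(r+1)^2 - (c/2)*r^2 = (c*(2*r+1))/2" by (simp add: power2_eq_square algebra_simps)
    also have "(c*(2*r+1))/2/(r^2*(r+1)^2) = c*(2*r+1)/(2*r^2*(r+1)^2)" by (simp add: mult.assoc)
    finally show ?thesis .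
  qed
  have D: "2 * r^2 * (r+1)^2 = (r * (r + 1)^2) * (2 * r)" by (simp add: power2_eq_square algebra_simps)
  have r0: "2 * r \<noteq> 0" using assms by simp
  have e2: "c / (r * (r + 1)^2) = c * (2 * r) / (2 * r^2 * (r+1)^2)"
    unfolding D using r0 by simp
  have "c * (2 * r) \<le> c * (2 * r + 1)" using assms by (intro mult_left_mono) auto
  then have "c * (2 * r) / (2 * r^2 * (r+1)^2) \<le> c * (2 * r + 1) / (2 * r^2 * (r+1)^2)"
    by (rule divide_right_mono) simp
  then show ?thesis using e1 e2 by simp
qed

lemma tele:
  assumes c: "0 \<le> c"
  shows "(\<Sum>k. ennreal (c / (real (k+m+1) * (real (k+m+1) + 1)^2))) \<le> ennreal (c / (2 * (real m + 1)^2))"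
proof -
  define h where "h n = c / 2 / (real (n+m+1))^2" for n
  have "h \<longlonglongrightarrow> 0" unfolding h_def by real_asymp
  then have s: "(\<lambda>n. h n - h (Suc n)) sums (h 0 - 0)" by (rule telescope_sums')
  have pt: "c / (real (k+m+1) * (real (k+m+1) + 1)^2) \<le> h k - h (Suc k)" for k
    using tele_pt[of "real (k+m+1)" c] c by (simp add: h_def add.commute add.left_commute)
  have nn: "0 \<le> c / (real (k+m+1) * (real (k+m+1) + 1)^2)" for k using c by simp
  have "(\<Sum>k. ennreal (c / (real (k+m+1) * (real (k+m+1) + 1)^2))) \<le> (\<Sum>k. ennreal (h k - h (Suc k)))"
  proof (rule suminf_le)
    fix k show "ennreal (c / (real (k+m+1) * (real (k+m+1) + 1)^2)) \<le> ennreal (h k - h (Suc k))"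
      by (rule ennreal_leI[OF pt])
  qed simp_all
  also have "\<dots> = ennreal (\<Sum>k. h k - h (Suc k))"
    by (rule suminf_ennreal2) (use pt nn order_trans in blast, use s in \<open>simp add: sums_iff\<close>)
  also have "(\<Sum>k. h k - h (Suc k)) = h 0" using s by (simp add: sums_iff)
  also have "h 0 = c / (2 * (real m + 1)^2)" by (simp add: h_def add.commute)
  finally show ?thesis .
qed

fun E :: "nat \<Rightarrow> nat \<Rightarrow> nat \<Rightarrow> real set" where
  "E d 0 m = (\<Union>k. img (k+m+1) {1 / (real (k+m+1+d) + 1) .. 1 / real (k+m+1+d)})"
| "E d (Suc n) m = (\<Union>k. img (k+m+1) (E d n (k+m+1)))"

lemma E_sets: "E d n m \<in> sets borel"
proof (induction n arbitrary: m)
  case 0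
  have "img (k+m+1) {1 / (real (k+m+1+d) + 1) .. 1 / real (k+m+1+d)} \<in> sets borel" for k
    by (rule img_sets) simp
  then show ?case by (simp add: sets.countable_UN image_subset_iff)
next
  case (Suc n)
  have "img (k+m+1) (E d n (k+m+1)) \<in> sets borel" for k by (rule img_sets[OF Suc.IH])
  then show ?case by (simp add: sets.countable_UN image_subset_iff)
qed

lemma img_bound:
  assumes A: "A \<in> sets borel" and r: "0 < r" and c: "emeasure lborel A \<le> ennreal (c / (real r + 1)^2)"
  shows "emeasure lborel (img r A) \<le> ennreal (c / (real r * (real r + 1)^2))"
proof -
  have "ennreal (real r) * emeasure lborel (img r A) \<le> ennreal (c / (real r + 1)^2)"
    using img_measure[OF A r] c by simp
  then have "emeasure lborel (img r A) \<le> ennreal (c / (real r + 1)^2 / real r)"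
    by (rule ennr_div) (use r in simp)
  also have "c / (real r + 1)^2 / real r = c / (real r * (real r + 1)^2)" by (simp add: mult.commute)
  finally show ?thesis .
qed

lemma union_bound:
  assumes A: "\<And>k. A k \<in> sets borel" and c: "0 \<le> c"
    and b: "\<And>k. emeasure lborel (A k) \<le> ennreal (c / (real (k+m+1) * (real (k+m+1) + 1)^2))"
  shows "emeasure lborel (\<Union>k. A k) \<le> ennreal (c / (2 * (real m + 1)^2))"
proof -
  have "emeasure lborel (\<Union>k. A k) \<le> (\<Sum>k. emeasure lborel (A k))"
    by (rule emeasure_subadditive_countably) (use A in auto)
  also have "\<dots> \<le> (\<Sum>k. ennreal (c / (real (k+m+1) * (real (k+m+1) + 1)^2)))"
    by (rule suminf_le) (use b in simp_all)
  also have "\<dots> \<le> ennreal (c / (2 * (real m + 1)^2))" by (rule tele[OF c])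
  finally show ?thesis .
qed

lemma icc_bound:
  fixes x r :: real
  assumes "r + 1 \<le> x" "0 \<le> r"
  shows "1 / x - 1 / (x + 1) \<le> 1 / (r + 1)^2"
proof -
  have a: "x \<noteq> 0" "x + 1 \<noteq> 0" using assms by auto
  have "1 / x - 1 / (x + 1) = (1 * (x+1) - 1 * x) / (x * (x+1))" by (rule diff_frac_eq) (use a in simp_all)
  also have "\<dots> = 1 / (x * (x+1))" by simp
  also have "\<dots> \<le> 1 / (r + 1)^2"
  proof (rule divide_left_mono)
    show "(r + 1)^2 \<le> x * (x + 1)" unfolding power2_eq_square using assms by (intro mult_mono) auto
    show "0 < x * (x + 1) * (r + 1)^2" using assms by simp
  qed simp
  finally show ?thesis .
qed

lemma E_measure:
  assumes d: "1 \<le> d"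
  shows "emeasure lborel (E d n m) \<le> ennreal ((1/2)^n / (2 * (real m + 1)^2))"
proof (induction n arbitrary: m)
  case 0
  have "emeasure lborel (\<Union>k. img (k+m+1) {1 / (real (k+m+1+d) + 1) .. 1 / real (k+m+1+d)})
        \<le> ennreal (1 / (2 * (real m + 1)^2))"
  proof (rule union_bound)
    fix k
    define r where "r = k+m+1"
    have le: "1 / (real (r+d) + 1) \<le> 1 / real (r+d)" using d by (intro divide_left_mono) (auto simp: r_def)
    have "emeasure lborel {1 / (real (r+d) + 1) .. 1 / real (r+d)} = ennreal (1 / real (r+d) - 1 / (real (r+d) + 1))"
      by (rule emeasure_lborel_Icc[OF le])
    also have "\<dots> \<le> ennreal (1 / (real r + 1)^2)"
      by (rule ennreal_leI, rule icc_bound) (use d in auto)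
    finally have "emeasure lborel (img r {1 / (real (r+d) + 1) .. 1 / real (r+d)}) \<le> ennreal (1 / (real r * (real r + 1)^2))"
      by (intro img_bound) (auto simp: r_def)
    then show "emeasure lborel (img (k+m+1) {1 / (real (k+m+1+d) + 1) .. 1 / real (k+m+1+d)}) \<le> ennreal (1 / (real (k+m+1) * (real (k+m+1) + 1)^2))"
      by (simp add: r_def)
  qed (auto intro: img_sets)
  then show ?case by simp
next
  case (Suc n)
  have "emeasure lborel (\<Union>k. img (k+m+1) (E d n (k+m+1))) \<le> ennreal ((1/2)^n / 2 / (2 * (real m + 1)^2))"
  proof (rule union_bound)
    fix k
    have "emeasure lborel (E d n (k+m+1)) \<le> ennreal ((1/2)^n / 2 / (real (k+m+1) + 1)^2)"
      using Suc.IH[of "k+m+1"] by (simp add: mult.commute)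
    then show "emeasure lborel (img (k+m+1) (E d n (k+m+1))) \<le> ennreal ((1/2)^n / 2 / (real (k+m+1) * (real (k+m+1) + 1)^2))"
      by (intro img_bound E_sets) auto
  qed (auto intro: img_sets E_sets)
  then show ?case by (simp add: mult.commute)
qed

lemma G_img:
  assumes "inc q"
  shows "1 - real (q 0) * G q = G (\<lambda>k. q (Suc k))"
proof -
  have q0: "real (q 0) \<noteq> 0" using inc_ge[OF assms, of 0] by simp
  show ?thesis using G_shift[OF assms] q0 by simp
qed

lemma E_mem:
  assumes "inc q" "m < q 0" "q (Suc n) = q n + d"
  shows "G q \<in> E d n m"
  using assms
proof (induction n arbitrary: q m)
  case 0
  define k where "k = q 0 - m - 1"
  have kq: "k + m + 1 = q 0" using 0 by (simp add: k_def)
  have sh: "inc (\<lambda>k. q (Suc k))" by (rule inc_shift[OF 0(1)])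
  have q1: "q 1 = q 0 + d" using 0 by simp
  have b1: "1 / (real (q 1) + 1) \<le> G (\<lambda>k. q (Suc k))" using G_bounds(1)[OF sh] by simp
  have b2: "G (\<lambda>k. q (Suc k)) \<le> 1 / real (q 1)" using G_bounds(2)[OF sh] by simp
  have "G q \<in> img (q 0) {1 / (real (q 0 + d) + 1) .. 1 / real (q 0 + d)}"
    unfolding img_def using G_img[OF 0(1)] b1 b2 q1 by simp
  then have "G q \<in> img (k+m+1) {1 / (real (k+m+1+d) + 1) .. 1 / real (k+m+1+d)}" by (simp only: kq)
  then show ?case by auto
next
  case (Suc n)
  define k where "k = q 0 - m - 1"
  have kq: "k + m + 1 = q 0" using Suc by (simp add: k_def)
  have sh: "inc (\<lambda>k. q (Suc k))" by (rule inc_shift[OF Suc.prems(1)])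
  have "q 0 < q 1" using Suc.prems(1) by (simp add: inc_def)
  then have "G (\<lambda>k. q (Suc k)) \<in> E d n (q 0)"
    using Suc.IH[OF sh] Suc.prems(3) by simp
  then have "G q \<in> img (q 0) (E d n (q 0))"
    unfolding img_def using G_img[OF Suc.prems(1)] by simp
  then have "G q \<in> img (k+m+1) (E d n (k+m+1))" by (simp only: kq)
  then show ?case by auto
qed

definition S :: "nat \<Rightarrow> real set" where "S d = (\<Inter>K. \<Union>n. E d (n+K) 0)"

lemma S_sets: "S d \<in> sets borel"
  unfolding S_def by (intro sets.countable_INT' sets.countable_UN') (auto intro: E_sets)

lemma S_mem:
  assumes "inc q" "\<forall>K. \<exists>n\<ge>K. q (Suc n) = q n + d"
  shows "G q \<in> S d"
  unfolding S_def
proof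
  fix K
  obtain n where n: "n \<ge> K" "q (Suc n) = q n + d" using assms(2) by blast
  have "0 < q 0" using inc_ge[OF assms(1), of 0] by simp
  then have "G q \<in> E d ((n - K) + K) 0" using E_mem[OF assms(1)] n by simp
  then show "G q \<in> (\<Union>n. E d (n+K) 0)" by blast
qed

lemma S_null:
  assumes d: "1 \<le> d"
  shows "emeasure lborel (S d) = 0"
proof -
  have bound: "emeasure lborel (S d) \<le> ennreal ((1/2)^K)" for K
  proof -
    have "emeasure lborel (S d) \<le> emeasure lborel (\<Union>n. E d (n+K) 0)"
      by (rule emeasure_mono) (auto simp: S_def intro: sets.countable_UN' E_sets)
    also have "\<dots> \<le> (\<Sum>n. emeasure lborel (E d (n+K) 0))"
      by (rule emeasure_subadditive_countably) (auto intro: E_sets)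
    also have "\<dots> \<le> (\<Sum>n. ennreal ((1/2)^n * ((1/2)^K / 2)))"
    proof (rule suminf_le)
      fix n
      have "emeasure lborel (E d (n+K) 0) \<le> ennreal ((1/2)^(n+K) / (2 * (real 0 + 1)^2))"
        by (rule E_measure[OF d])
      also have "(1/2::real)^(n+K) / (2 * (real 0 + 1)^2) = (1/2)^n * ((1/2)^K / 2)"
        by (simp add: power_add)
      finally show "emeasure lborel (E d (n+K) 0) \<le> ennreal ((1/2)^n * ((1/2)^K / 2))" .
    qed simp_all
    also have "\<dots> = ennreal (\<Sum>n. (1/2::real)^n * ((1/2)^K / 2))"
    proof (rule suminf_ennreal2)
      show "summable (\<lambda>n. (1/2::real)^n * ((1/2)^K / 2))"
        by (rule summable_mult2, rule summable_geometric) simp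
    qed simp
    also have "(\<Sum>n. (1/2::real)^n * ((1/2)^K / 2)) = 2 * ((1/2)^K / 2)"
    proof -
      have "(\<lambda>n. (1/2::real)^n) sums (1 / (1 - 1/2))" by (rule geometric_sums) simp
      then have "(\<lambda>n. (1/2::real)^n * ((1/2)^K / 2)) sums ((1 / (1 - 1/2)) * ((1/2)^K / 2))"
        by (rule sums_mult2)
      then show ?thesis by (simp add: sums_iff)
    qed
    finally show ?thesis by simp
  qed
  have "emeasure lborel (S d) \<le> 0"
  proof (rule LIMSEQ_le_const)
    have "(\<lambda>K. (1/2::real)^K) \<longlonglongrightarrow> 0" by (rule LIMSEQ_power_zero) simp
    then show "(\<lambda>K. ennreal ((1/2)^K)) \<longlonglongrightarrow> 0"
      unfolding ennreal_0[symmetric] by (intro tendsto_ennrealI)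
    show "\<exists>N. \<forall>n\<ge>N. emeasure lborel (S d) \<le> ennreal ((1/2)^n)" using bound by blast
  qed
  then show ?thesis by simp
qed



lemma unbounded_partial:
  fixes f :: "nat \<Rightarrow> real"
  assumes "\<And>k. 0 \<le> f k" "\<not> summable f"
  shows "\<exists>n. B < (\<Sum>k<n. f k)"
proof (rule ccontr)
  assume "\<not> (\<exists>n. B < (\<Sum>k<n. f k))"
  then have "\<And>n. (\<Sum>k<n. f k) \<le> B" by (simp add: not_less)
  then have "summable f" by (rule summableI_nonneg_bounded[OF assms(1)])
  then show False using assms(2) by simp
qed

lemma prod_exp_bound:
  fixes p :: "nat \<Rightarrow> real"
  assumes "\<And>k. 0 \<le> 1 - p k" "finite J"
  shows "(\<Prod>k\<in>J. 1 - p k) \<le> exp (- (\<Sum>k\<in>J. p k))"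
proof -
  have "(\<Prod>k\<in>J. 1 - p k) \<le> (\<Prod>k\<in>J. exp (- p k))"
  proof (rule prod_mono)
    fix k assume "k \<in> J"
    show "0 \<le> 1 - p k \<and> 1 - p k \<le> exp (- p k)" using assms(1)[of k] exp_ge_add_one_self[of "- p k"] by simp
  qed
  also have "\<dots> = exp (\<Sum>k\<in>J. - p k)" by (rule exp_sum[symmetric, OF assms(2)])
  finally show ?thesis by (simp add: sum_negf)
qed

lemma (in prob_space) BC2:
  assumes X: "\<And>k. X k \<in> measurable M (count_space UNIV)"
    and ind: "indep_vars (\<lambda>_. count_space UNIV) X UNIV"
    and ns: "\<not> summable (\<lambda>k. measure M {\<omega> \<in> space M. X k \<omega> = d})"
  shows "AE \<omega> in M. \<forall>K. \<exists>n\<ge>K. X n \<omega> = (d::nat)"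
proof -
  define pr where "pr k = measure M {\<omega> \<in> space M. X k \<omega> = d}" for k
  have pre: "X k -` {d} \<inter> space M = {\<omega> \<in> space M. X k \<omega> = d}" for k by auto
  have ev: "X k -` A \<inter> space M \<in> events" for k A by (rule measurable_sets[OF X]) simp
  have pr_nn: "0 \<le> pr k" for k by (simp add: pr_def)
  have pr_le: "pr k \<le> 1" for k by (simp add: pr_def)
  have compl: "prob (X k -` (UNIV - {d}) \<inter> space M) = 1 - pr k" for k
  proof -
    have "X k -` (UNIV - {d}) \<inter> space M = space M - (X k -` {d} \<inter> space M)" by auto
    then show ?thesis using prob_compl[OF ev[of k "{d}"]] pre[of k] by (simp add: pr_def)
  qed
  have null: "emeasure M {\<omega> \<in> space M. \<forall>n\<ge>K. X n \<omega> \<noteq> d} = 0" for K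
  proof -
    define F where "F = {\<omega> \<in> space M. \<forall>n\<ge>K. X n \<omega> \<noteq> d}"
    have Fs: "F \<in> events"
    proof -
      have "F = (\<Inter>n\<in>{K..}. X n -` (UNIV - {d}) \<inter> space M) \<inter> space M" by (auto simp: F_def)
      also have "\<dots> \<in> events" by (intro sets.Int sets.countable_INT') (auto intro: ev)
      finally show ?thesis .
    qed
    have bnd: "prob F \<le> exp (- t)" if t0: "0 \<le> t" for t
    proof -
      obtain n where n: "(\<Sum>k<K. pr k) + t < (\<Sum>k<n. pr k)"
        using unbounded_partial[OF pr_nn ns[folded pr_def]] by blast
      have Kn: "K < n"
      proof (rule ccontr)
        assume "\<not> K < n"
        then have "(\<Sum>k<n. pr k) \<le> (\<Sum>k<K. pr k)" by (intro sum_mono2) (auto simp: pr_nn)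
        then show False using n t0 by linarith
      qed
      define J where "J = {K..<n}"
      have J: "J \<noteq> {}" "finite J" using Kn by (auto simp: J_def)
      have "F \<subseteq> (\<Inter>k\<in>J. X k -` (UNIV - {d}) \<inter> space M)" using J(1) by (auto simp: F_def J_def)
      then have "prob F \<le> prob (\<Inter>k\<in>J. X k -` (UNIV - {d}) \<inter> space M)"
      proof (rule finite_measure_mono)
        show "(\<Inter>k\<in>J. X k -` (UNIV - {d}) \<inter> space M) \<in> events"
          by (rule sets.finite_INT) (use J ev in auto)
      qed
      also have "\<dots> = (\<Prod>k\<in>J. prob (X k -` (UNIV - {d}) \<inter> space M))"
        by (rule indep_varsD[OF ind J]) auto
      also have "\<dots> = (\<Prod>k\<in>J. 1 - pr k)" by (simp add: compl)
      also have "\<dots> \<le> exp (- (\<Sum>k\<in>J. pr k))" by (rule prod_exp_bound) (use pr_le J in auto)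
      also have "\<dots> \<le> exp (- t)"
      proof -
        have "(\<Sum>k<K. pr k) + (\<Sum>k\<in>J. pr k) = (\<Sum>k<n. pr k)"
          unfolding J_def lessThan_atLeast0 by (rule sum.atLeastLessThan_concat) (use Kn in auto)
        then have "t < (\<Sum>k\<in>J. pr k)" using n by linarith
        then show ?thesis by simp
      qed
      finally show ?thesis .
    qed
    have "prob F = 0"
    proof (rule ccontr)
      assume "prob F \<noteq> 0"
      then have a: "0 < prob F" using measure_nonneg[of M F] by linarith
      have "prob F \<le> 1" by simp
      then have "ln (prob F) \<le> 0" using a by simp
      then have "0 \<le> 1 - ln (prob F)" by linarith
      then have "prob F \<le> exp (- (1 - ln (prob F)))" by (rule bnd)
      also have "- (1 - ln (prob F)) = ln (prob F) - 1" by simp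
      also have "exp (ln (prob F) - 1) = prob F / exp 1"
        using exp_diff[of "ln (prob F)" 1] by (simp only: exp_ln[OF a])
      also have "\<dots> < prob F"
      proof -
        have "prob F * 1 < prob F * exp 1" by (rule mult_strict_left_mono) (simp_all add: a)
        then show ?thesis by (subst pos_divide_less_eq) simp_all
      qed
      finally show False by simp
    qed
    then have "emeasure M F = 0" by (simp only: emeasure_eq_measure ennreal_0)
    then show ?thesis by (simp only: F_def)
  qed
  have "AE \<omega> in M. \<exists>n\<ge>K. X n \<omega> = d" for K
  proof (rule AE_I')
    show "{\<omega> \<in> space M. \<forall>n\<ge>K. X n \<omega> \<noteq> d} \<in> null_sets M"
    proof (rule null_setsI[OF null])
      have "{\<omega> \<in> space M. \<forall>n\<ge>K. X n \<omega> \<noteq> d} = (\<Inter>n\<in>{K..}. X n -` (UNIV - {d}) \<inter> space M) \<inter> space M" by auto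
      also have "\<dots> \<in> events" by (intro sets.Int sets.countable_INT') (auto intro: ev)
      finally show "{\<omega> \<in> space M. \<forall>n\<ge>K. X n \<omega> \<noteq> d} \<in> events" .
    qed
  qed auto
  then show ?thesis by (subst AE_all_countable) blast
qed

lemma sum_inj:
  fixes a b :: "nat \<Rightarrow> nat" and k :: nat
  assumes "\<And>k. (\<Sum>i\<le>k. a i) = (\<Sum>i\<le>k. b i::nat)"
  shows "a k = b k"
proof (cases k)
  case 0 then show ?thesis using assms[of 0] by simp
next
  case (Suc j)
  have "(\<Sum>i\<le>j. a i) + a (Suc j) = (\<Sum>i\<le>j. b i) + b (Suc j)" using assms[of "Suc j"] by simp
  then show ?thesis using assms[of j] Suc by simp
qed

lemma Q_inc:
  assumes "\<And>k. 1 \<le> f k"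
  shows "inc (\<lambda>k. \<Sum>i\<le>k. f i)"
  unfolding inc_def
proof
  show "\<forall>k. (\<Sum>i\<le>k. f i) < (\<Sum>i\<le>Suc k. f i)"
  proof
    fix k have "1 \<le> f (Suc k)" by (rule assms)
    then show "(\<Sum>i\<le>k. f i) < (\<Sum>i\<le>Suc k. f i)" by simp
  qed
  show "1 \<le> (\<Sum>i\<le>0. f i)" using assms[of 0] by simp
qed

lemma (in prob_space) atoms_zero:
  assumes X: "\<And>k. X k \<in> measurable M (count_space UNIV)"
    and ind: "indep_vars (\<lambda>_. count_space UNIV) X UNIV"
    and ge: "\<And>k \<omega>. \<omega> \<in> space M \<Longrightarrow> 1 \<le> X k \<omega>"
    and e: "\<And>\<omega>. \<omega> \<in> space M \<Longrightarrow> e \<omega> = G (\<lambda>k. \<Sum>i\<le>k. X i \<omega>)"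
    and lim: "(\<lambda>n. \<Prod>k<n. (SUP i. measure M {\<omega> \<in> space M. X k \<omega> = i})) \<longlonglongrightarrow> 0"
  shows "prob {\<omega> \<in> space M. e \<omega> = x} = 0"
proof (cases "{\<omega> \<in> space M. e \<omega> = x} = {}")
  case True then show ?thesis by (simp only: True measure_empty)
next
  case False
  then obtain \<omega>0 where w0: "\<omega>0 \<in> space M" "e \<omega>0 = x" by blast
  define s where "s k = (SUP i. measure M {\<omega> \<in> space M. X k \<omega> = i})" for k
  define c where "c k = X k \<omega>0" for k
  have ev: "X k -` A \<inter> space M \<in> events" for k A by (rule measurable_sets[OF X]) simp
  have bdd: "bdd_above (range (\<lambda>i. measure M {\<omega> \<in> space M. X k \<omega> = i}))" for k
    by (rule bdd_aboveI[where M=1]) auto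
  have ps: "measure M {\<omega> \<in> space M. X k \<omega> = i} \<le> s k" for k i
    unfolding s_def by (rule cSUP_upper[OF _ bdd]) simp
  have sub: "{\<omega> \<in> space M. e \<omega> = x} \<subseteq> (\<Inter>k\<in>{..<n}. X k -` {c k} \<inter> space M)" if "0 < n" for n
  proof
    fix \<omega> assume w: "\<omega> \<in> {\<omega> \<in> space M. e \<omega> = x}"
    have i1: "inc (\<lambda>k. \<Sum>i\<le>k. X i \<omega>)" by (rule Q_inc) (use w ge in auto)
    have i2: "inc (\<lambda>k. \<Sum>i\<le>k. X i \<omega>0)" by (rule Q_inc) (use w0 ge in auto)
    have "G (\<lambda>k. \<Sum>i\<le>k. X i \<omega>) = G (\<lambda>k. \<Sum>i\<le>k. X i \<omega>0)"
      using e[of \<omega>] e[of \<omega>0] w w0 by simp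
    then have Qeq: "(\<lambda>k. \<Sum>i\<le>k. X i \<omega>) = (\<lambda>k. \<Sum>i\<le>k. X i \<omega>0)" by (rule G_inj[OF i1 i2])
    have "X k \<omega> = X k \<omega>0" for k
      by (rule sum_inj[of "\<lambda>i. X i \<omega>" "\<lambda>i. X i \<omega>0"], rule fun_cong[OF Qeq])
    then show "\<omega> \<in> (\<Inter>k\<in>{..<n}. X k -` {c k} \<inter> space M)" using w by (auto simp: c_def)
  qed
  have bnd: "prob {\<omega> \<in> space M. e \<omega> = x} \<le> (\<Prod>k<n. s k)" if n: "0 < n" for n
  proof -
    have "prob {\<omega> \<in> space M. e \<omega> = x} \<le> prob (\<Inter>k\<in>{..<n}. X k -` {c k} \<inter> space M)"
    proof (rule finite_measure_mono[OF sub[OF n]])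
      show "(\<Inter>k\<in>{..<n}. X k -` {c k} \<inter> space M) \<in> events"
        by (rule sets.finite_INT) (use n ev in auto)
    qed
    also have "\<dots> = (\<Prod>k<n. prob (X k -` {c k} \<inter> space M))"
      by (rule indep_varsD[OF ind]) (use n in auto)
    also have "\<dots> \<le> (\<Prod>k<n. s k)"
    proof (rule prod_mono)
      fix k
      have "X k -` {c k} \<inter> space M = {\<omega> \<in> space M. X k \<omega> = c k}" by auto
      then show "0 \<le> prob (X k -` {c k} \<inter> space M) \<and> prob (X k -` {c k} \<inter> space M) \<le> s k"
        using ps[of k "c k"] by simp
    qed
    finally show ?thesis .
  qed
  have "prob {\<omega> \<in> space M. e \<omega> = x} \<le> 0"
  proof (rule LIMSEQ_le_const)
    show "(\<lambda>n. \<Prod>k<n. s k) \<longlonglongrightarrow> 0" using lim by (simp add: s_def)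
    show "\<exists>N. \<forall>n\<ge>N. prob {\<omega> \<in> space M. e \<omega> = x} \<le> (\<Prod>k<n. s k)"
      using bnd by (intro exI[of _ 1]) auto
  qed
  then show ?thesis using measure_nonneg[of M "{\<omega> \<in> space M. e \<omega> = x}"] by linarith
qed

lemma (in prob_space) discrete_part:
  assumes X: "\<And>k. X k \<in> measurable M (count_space UNIV)"
    and e: "\<And>\<omega>. \<omega> \<in> space M \<Longrightarrow> e \<omega> = G (\<lambda>k. \<Sum>i\<le>k. X i \<omega>)"
    and L: "0 < L" "(\<lambda>n. \<Prod>k<n. (SUP i. measure M {\<omega> \<in> space M. X k \<omega> = i})) \<longlonglongrightarrow> L"
  shows "\<exists>S. countable S \<and> (AE \<omega> in M. e \<omega> \<in> S)"
proof -
  define pr where "pr i k = measure M {\<omega> \<in> space M. X k \<omega> = i}" for i k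
  define s where "s k = (SUP i. pr i k)" for k
  define P where "P n = (\<Prod>k<n. s k)" for n
  have PL: "P \<longlonglongrightarrow> L" using L(2) unfolding P_def[abs_def] s_def pr_def .
  have ev: "X k -` A \<inter> space M \<in> events" for k A by (rule measurable_sets[OF X]) simp
  have bdd: "bdd_above (range (\<lambda>i. pr i k))" for k
    by (rule bdd_aboveI[where M=1]) (auto simp: pr_def)
  have ps: "pr i k \<le> s k" for k i
    unfolding s_def by (rule cSUP_upper[OF _ bdd]) simp
  have s_nn: "0 \<le> s k" for k using ps[of 0 k] by (simp add: pr_def order_trans[OF measure_nonneg])
  have s_le: "s k \<le> 1" for k unfolding s_def by (rule cSUP_least) (auto simp: pr_def)
  have dec: "decseq P"
  proof (rule decseq_SucI)
    fix n
    have "0 \<le> P n" unfolding P_def by (rule prod_nonneg) (use s_nn in auto)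
    then have "P n * s n \<le> P n" by (rule mult_left_le[OF s_le])
    then show "P (Suc n) \<le> P n" by (simp add: P_def)
  qed
  have PgeL: "L \<le> P n" for n by (rule decseq_ge[OF dec PL])
  have sbound: "(\<Sum>k<n. 1 - s k) \<le> - ln L" for n
  proof -
    have "P n \<le> exp (- (\<Sum>k<n. 1 - s k))"
    proof -
      have "(\<Prod>k<n. 1 - (1 - s k)) \<le> exp (- (\<Sum>k<n. 1 - s k))"
        by (rule prod_exp_bound) (use s_nn in simp_all)
      then show ?thesis by (simp add: P_def)
    qed
    then have "L \<le> exp (- (\<Sum>k<n. 1 - s k))" using PgeL[of n] by linarith
    then have "ln L \<le> ln (exp (- (\<Sum>k<n. 1 - s k)))" using L(1) by (subst ln_le_cancel_iff) simp_all
    then show ?thesis by simp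
  qed
  have sum1: "summable (\<lambda>k. 1 - s k)"
    by (rule summableI_nonneg_bounded[OF _ sbound]) (use s_le in simp)
  have "\<forall>k. \<exists>i. s k - (1/2)^k < pr i k"
  proof
    fix k
    have "s k - (1/2)^k < s k" by simp
    then show "\<exists>i. s k - (1/2)^k < pr i k" unfolding s_def using less_cSUP_iff[OF _ bdd[of k]] by simp
  qed
  then obtain m where m: "\<And>k. s k - (1/2)^k < pr (m k) k" by (metis choice)
  define A where "A k = space M - (X k -` {m k} \<inter> space M)" for k
  have As: "A k \<in> events" for k unfolding A_def using ev by blast
  have Am: "measure M (A k) = 1 - pr (m k) k" for k
  proof -
    have "X k -` {m k} \<inter> space M = {\<omega> \<in> space M. X k \<omega> = m k}" by auto
    then show ?thesis unfolding A_def using prob_compl[OF ev[of k "{m k}"]] by (simp add: pr_def)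
  qed
  have sumA: "summable (\<lambda>k. measure M (A k))"
  proof (rule summable_comparison_test')
    show "summable (\<lambda>k. (1 - s k) + (1/2::real)^k)"
      by (rule summable_add[OF sum1]) (rule summable_geometric, simp)
    fix k
    have "pr (m k) k \<le> 1" by (simp add: pr_def)
    then have "norm (measure M (A k)) = 1 - pr (m k) k" using Am[of k] by simp
    then show "norm (measure M (A k)) \<le> (1 - s k) + (1/2)^k"
      using m[of k] by linarith
  qed
  have BC: "AE \<omega> in M. eventually (\<lambda>n. \<omega> \<in> space M - A n) sequentially"
    by (rule borel_cantelli_AE1[OF As _ sumA]) (simp add: emeasure_eq_measure)
  define F where "F xs = G (\<lambda>k. \<Sum>i\<le>k. (if i < length xs then xs ! i else m i))" for xs :: "nat list"
  have key: "e \<omega> \<in> range F" if w: "\<omega> \<in> space M" and evn: "eventually (\<lambda>n. \<omega> \<in> space M - A n) sequentially" for \<omega>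
  proof -
    obtain N where N: "\<And>n. n \<ge> N \<Longrightarrow> \<omega> \<in> space M - A n" using evn by (auto simp: eventually_sequentially)
    define xs where "xs = map (\<lambda>i. X i \<omega>) [0..<N]"
    have eqf: "(\<lambda>i. if i < length xs then xs ! i else m i) = (\<lambda>i. X i \<omega>)"
    proof
      fix i show "(if i < length xs then xs ! i else m i) = X i \<omega>"
      proof (cases "i < N")
        case True then show ?thesis by (simp add: xs_def)
      next
        case False then have "N \<le> i" by simp
        then have "\<omega> \<in> space M - A i" by (rule N)
        then show ?thesis using False by (auto simp: A_def xs_def)
      qed
    qed
    have "e \<omega> = F xs" unfolding F_def e[OF w] eqf ..
    then show ?thesis by simp
  qed
  have "AE \<omega> in M. e \<omega> \<in> range F"
    using AE_space BC by eventually_elim (rule key)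
  moreover have "countable (range F)" by (rule countable_image) simp
  ultimately show ?thesis by blast
qed



theorem mainTheorem11:
  fixes M :: "'a measure" and X :: "nat \<Rightarrow> 'a \<Rightarrow> nat"
    and p :: "nat \<Rightarrow> nat \<Rightarrow> real" and eta :: "'a \<Rightarrow> real"
  assumes "prob_space M"
    and "\<And>k. X k \<in> measurable M (count_space UNIV)"
    and "prob_space.indep_vars M (\<lambda>_. count_space UNIV) X UNIV"
    and "\<And>k \<omega>. \<omega> \<in> space M \<Longrightarrow> X k \<omega> \<ge> 1"
    and "\<And>i k. p i k = measure M {\<omega> \<in> space M. X k \<omega> = i}"
    and "\<exists>i0. \<not> summable (\<lambda>k. p i0 k)"
    and "\<And>\<omega>. eta \<omega> = (\<Sum>k. (-1) ^ k / (\<Prod>j\<le>k. real (\<Sum>i\<le>j. X i \<omega>)))"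
  shows "(purely_discrete_distr (distr M borel eta) \<longleftrightarrow>
            (\<exists>L>0. (\<lambda>n. \<Prod>k<n. (SUP i. p i k)) \<longlonglongrightarrow> L))
       \<and> (\<not> (\<exists>L>0. (\<lambda>n. \<Prod>k<n. (SUP i. p i k)) \<longlonglongrightarrow> L)
            \<longrightarrow> singular_continuous_distr (distr M borel eta))"
proof -
  interpret P: prob_space M by (rule assms(1))
  note Xm[measurable] = assms(2)
  have ind: "P.indep_vars (\<lambda>_. count_space UNIV) X UNIV" by (rule assms(3))
  have eG: "eta \<omega> = G (\<lambda>k. \<Sum>i\<le>k. X i \<omega>)" for \<omega> unfolding G_def assms(7) ..
  have incQ: "inc (\<lambda>k. \<Sum>i\<le>k. X i \<omega>)" if "\<omega> \<in> space M" for \<omega>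
    by (rule Q_inc) (use assms(4) that in auto)
  have etam: "eta \<in> borel_measurable M"
  proof (rule borel_measurable_LIMSEQ_real)
    fix \<omega> assume w: "\<omega> \<in> space M"
    have "summable (\<lambda>k. (-1)^k / (\<Prod>j\<le>k. real (\<Sum>i\<le>j. X i \<omega>)))"
      by (rule G_leib(1)[OF incQ[OF w]])
    then show "(\<lambda>n. \<Sum>k<n. (-1)^k / (\<Prod>j\<le>k. real (\<Sum>i\<le>j. X i \<omega>))) \<longlonglongrightarrow> eta \<omega>"
      unfolding assms(7) by (rule summable_LIMSEQ)
  next
    fix n show "(\<lambda>\<omega>. \<Sum>k<n. (-1)^k / (\<Prod>j\<le>k. real (\<Sum>i\<le>j. X i \<omega>))) \<in> borel_measurable M"
      by measurable
  qed
  define Pr where "Pr n = (\<Prod>k<n. (SUP i. p i k))" for n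
  have Pr_eq: "(\<lambda>n. \<Prod>k<n. (SUP i. p i k)) = (\<lambda>n. \<Prod>k<n. (SUP i. measure M {\<omega> \<in> space M. X k \<omega> = i}))"
    by (simp add: assms(5))
  have bdd: "bdd_above (range (\<lambda>i. p i k))" for k
    by (rule bdd_aboveI[where M=1]) (auto simp: assms(5))
  have s_nn: "0 \<le> (SUP i. p i k)" for k
  proof -
    have "p 0 k \<le> (SUP i. p i k)" by (rule cSUP_upper[OF _ bdd]) simp
    moreover have "0 \<le> p 0 k" by (simp add: assms(5))
    ultimately show ?thesis by linarith
  qed
  have s_le: "(SUP i. p i k) \<le> 1" for k by (rule cSUP_least) (auto simp: assms(5))
  have Pr_nn: "0 \<le> Pr n" for n unfolding Pr_def by (rule prod_nonneg) (use s_nn in auto)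
  have dec: "decseq Pr"
  proof (rule decseq_SucI)
    fix n
    have "Pr n * (SUP i. p i n) \<le> Pr n" by (rule mult_left_le[OF s_le Pr_nn])
    then show "Pr (Suc n) \<le> Pr n" by (simp add: Pr_def)
  qed
  obtain L0 where L0: "Pr \<longlonglongrightarrow> L0"
    using decseq_convergent[OF dec, of 0] Pr_nn by blast
  have L0nn: "0 \<le> L0" by (rule LIMSEQ_le_const[OF L0]) (use Pr_nn in auto)
  have Prf: "Pr = (\<lambda>n. \<Prod>k<n. (SUP i. p i k))" by (simp add: Pr_def[abs_def])
  have N: "prob_space (distr M borel eta)" by (rule P.prob_space_distr[OF etam])
  have ctbl_borel: "S \<in> sets borel" if c: "countable S" for S :: "real set"
  proof -
    have "S = \<Union>((\<lambda>x. {x}) ` S)" by auto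
    also have "\<dots> \<in> sets borel" by (rule sets.countable_Union) (use c in auto)
    finally show ?thesis .
  qed
  have notdisc: "\<not> purely_discrete_distr (distr M borel eta)"
    if at: "\<And>x. emeasure (distr M borel eta) {x} = 0"
  proof
    assume "purely_discrete_distr (distr M borel eta)"
    then obtain S where S: "countable S" "AE x in distr M borel eta. x \<in> S"
      unfolding purely_discrete_distr_def by blast
    have Ss: "S \<in> sets (distr M borel eta)" using ctbl_borel[OF S(1)] by simp
    have "emeasure (distr M borel eta) S = (\<integral>\<^sup>+x. emeasure (distr M borel eta) {x} \<partial>count_space S)"
      by (rule emeasure_countable_singleton[OF _ S(1)]) simp
    also have "\<dots> = 0" using at by simp
    finally have "S \<in> null_sets (distr M borel eta)" using Ss by (rule null_setsI)
    then have "AE x in distr M borel eta. x \<notin> S" by (rule AE_I') auto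
    with S(2) have "AE x in distr M borel eta. False" by eventually_elim simp
    then show False using prob_space.AE_False[OF N] by simp
  qed
  show ?thesis
  proof (cases "\<exists>L>0. (\<lambda>n. \<Prod>k<n. (SUP i. p i k)) \<longlonglongrightarrow> L")
    case True
    then obtain L where L: "0 < L" "(\<lambda>n. \<Prod>k<n. (SUP i. p i k)) \<longlonglongrightarrow> L" by blast
    have "\<exists>S. countable S \<and> (AE \<omega> in M. eta \<omega> \<in> S)"
      by (rule P.discrete_part[OF assms(2) _ L(1)]) (use eG L(2) Pr_eq in simp_all)
    then obtain S where S: "countable S" "AE \<omega> in M. eta \<omega> \<in> S" by blast
    have "{x \<in> space borel. x \<in> S} \<in> sets borel" using ctbl_borel[OF S(1)] by simp
    then have "AE x in distr M borel eta. x \<in> S" using S(2) by (simp add: AE_distr_iff[OF etam])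
    then have "purely_discrete_distr (distr M borel eta)"
      unfolding purely_discrete_distr_def using S(1) by blast
    then show ?thesis using True by blast
  next
    case False
    have "L0 = 0"
    proof (rule ccontr)
      assume "L0 \<noteq> 0"
      then have "0 < L0" using L0nn by simp
      then show False using False L0 Prf by auto
    qed
    then have lim0: "(\<lambda>n. \<Prod>k<n. (SUP i. measure M {\<omega> \<in> space M. X k \<omega> = i})) \<longlonglongrightarrow> 0"
      using L0 Prf Pr_eq by simp
    have at: "emeasure (distr M borel eta) {x} = 0" for x
    proof -
      have "emeasure (distr M borel eta) {x} = emeasure M (eta -` {x} \<inter> space M)"
        by (rule emeasure_distr[OF etam]) simp
      also have "eta -` {x} \<inter> space M = {\<omega> \<in> space M. eta \<omega> = x}" by auto
      also have "emeasure M {\<omega> \<in> space M. eta \<omega> = x} = ennreal (P.prob {\<omega> \<in> space M. eta \<omega> = x})"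
        by (rule P.emeasure_eq_measure)
      also have "P.prob {\<omega> \<in> space M. eta \<omega> = x} = 0"
        by (rule P.atoms_zero[OF assms(2) ind _ _ lim0]) (use assms(4) eG in auto)
      finally show ?thesis by simp
    qed
    obtain d where d: "\<not> summable (\<lambda>k. p d k)" using assms(6) by blast
    have d1: "1 \<le> d"
    proof (rule ccontr)
      assume "\<not> 1 \<le> d"
      then have d0: "d = 0" by simp
      have "p d k = 0" for k
      proof -
        have "{\<omega> \<in> space M. X k \<omega> = 0} = {}"
        proof (rule equals0I)
          fix \<omega> assume "\<omega> \<in> {\<omega> \<in> space M. X k \<omega> = 0}"
          then show False using assms(4)[of \<omega> k] by simp
        qed
        then show ?thesis unfolding assms(5) d0 by (simp only: measure_empty)
      qed
      then show False using d by simp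
    qed
    have ns: "\<not> summable (\<lambda>k. measure M {\<omega> \<in> space M. X k \<omega> = d})" using d by (simp add: assms(5))
    have BC: "AE \<omega> in M. \<forall>K. \<exists>n\<ge>K. X n \<omega> = d" by (rule P.BC2[OF assms(2) ind ns])
    have memS: "eta \<omega> \<in> S d" if w: "\<omega> \<in> space M" and H: "\<forall>K. \<exists>n\<ge>K. X n \<omega> = d" for \<omega>
    proof -
      have "\<forall>K. \<exists>n\<ge>K. (\<Sum>i\<le>Suc n. X i \<omega>) = (\<Sum>i\<le>n. X i \<omega>) + d"
      proof
        fix K
        obtain n' where n': "n' \<ge> Suc K" "X n' \<omega> = d" using H by blast
        then obtain n where n: "n' = Suc n" by (cases n') auto
        have "n \<ge> K" using n' n by simp
        moreover have "(\<Sum>i\<le>Suc n. X i \<omega>) = (\<Sum>i\<le>n. X i \<omega>) + d" using n' n by simp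
        ultimately show "\<exists>n\<ge>K. (\<Sum>i\<le>Suc n. X i \<omega>) = (\<Sum>i\<le>n. X i \<omega>) + d" by blast
      qed
      then have "G (\<lambda>k. \<Sum>i\<le>k. X i \<omega>) \<in> S d" by (intro S_mem[OF incQ[OF w]]) simp
      then show ?thesis by (simp add: eG)
    qed
    have "AE \<omega> in M. eta \<omega> \<in> S d" using AE_space BC by eventually_elim (rule memS)
    moreover have "{x \<in> space borel. x \<in> S d} \<in> sets borel" using S_sets[of d] by simp
    ultimately have AEd: "AE x in distr M borel eta. x \<in> S d" by (simp add: AE_distr_iff[OF etam])
    have sc: "singular_continuous_distr (distr M borel eta)"
      unfolding singular_continuous_distr_def
      using at S_sets[of d] S_null[OF d1] AEd by blast
    show ?thesis using notdisc[OF at] sc False by blast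
  qed
qed

end
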